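(* Let $F=\frac1{16}\begin{pmatrix}1&2&1\\2&4&2\\1&2&1\end{pmatrix}$ (Gaussian blur filter). Then the equation $F*X=B$ with the periodic boundary condition, for unknown $X\in\mathbb{R}^{m\times n}$, has a unique solution for every $B\in\mathbb{R}^{m\times n}$ if and only if $m,n\notin\{2l: l\in\mathbb{N}\}$.
   Context: $\mathbb{N}=\{1,2,3,\dots\}$. For $F=[f_{ij}]\in\mathbb{R}^{3\times3}$ and $X=[x_{ij}]\in\mathbb{R}^{m\times n}$, the convolution $F*X\in\mathbb{R}^{m\times n}$ is defined by $[F*X]_{ij}=\sum_{l_1=1}^3\sum_{l_2=1}^3 f_{l_1l_2}\,x_{i-l_1+2,\,j-l_2+2}$ for $1\le i\le m$, $1\le j\le n$, where the periodic boundary condition sets $x_{0j}=x_{mj}$, $x_{m+1,j}=x_{1j}$, $x_{i0}=x_{in}$, $x_{i,n+1}=x_{i1}$ (for all indices $i\in\{0,\dots,m+1\}$, $j\in\{0,\dots,n+1\}$, so corners are also determined, e.g. $x_{00}=x_{mn}$). *)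

theory Defs
  imports Complex_Main
begin

text \<open>Matrices in R^{m x n} are represented as functions int => int => real
  indexed by {1..m} x {1..n}, and extensional (zero) outside.\<close>

definition mats :: "nat \<Rightarrow> nat \<Rightarrow> (int \<Rightarrow> int \<Rightarrow> real) set" where
  "mats m n = {X. \<forall>i j. \<not> (i \<in> {1..int m} \<and> j \<in> {1..int n}) \<longrightarrow> X i j = 0}"

definition wrap :: "nat \<Rightarrow> int \<Rightarrow> int" where
  "wrap m k = (k - 1) mod int m + 1"

definition conv :: "(int \<Rightarrow> int \<Rightarrow> real) \<Rightarrow> nat \<Rightarrow> nat \<Rightarrow> (int \<Rightarrow> int \<Rightarrow> real) \<Rightarrow> (int \<Rightarrow> int \<Rightarrow> real)" where
  "conv F m n X = (\<lambda>i j. if i \<in> {1..int m} \<and> j \<in> {1..int n} then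
      (\<Sum>l1\<in>{1..3}. \<Sum>l2\<in>{1..3}. F l1 l2 * X (wrap m (i - l1 + 2)) (wrap n (j - l2 + 2)))
    else 0)"

definition gauss_filter :: "int \<Rightarrow> int \<Rightarrow> real" where
  "gauss_filter l1 l2 =
     (if l1 \<in> {1..3} \<and> l2 \<in> {1..3}
      then (if l1 = 2 then 2 else 1) * (if l2 = 2 then 2 else 1) / 16 else 0)"

end

theory Submission imports Defs begin

definition per :: "nat \<Rightarrow> (int \<Rightarrow> real) \<Rightarrow> bool" where
  "per m f \<longleftrightarrow> (\<forall>k. f (k + int m) = f k)"
definition opA :: "(int \<Rightarrow> real) \<Rightarrow> int \<Rightarrow> real" where
  "opA f k = f (k - 1) + 2 * f k + f (k + 1)"
definition rs :: "(int \<Rightarrow> real) \<Rightarrow> int \<Rightarrow> real" where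
  "rs f k = f k + f (k + 1)"
definition ls :: "(int \<Rightarrow> real) \<Rightarrow> int \<Rightarrow> real" where
  "ls f k = f (k - 1) + f k"
definition rsi :: "nat \<Rightarrow> (int \<Rightarrow> real) \<Rightarrow> int \<Rightarrow> real" where
  "rsi m f k = (\<Sum>a<m. (-1) ^ a * f (k + int a)) / 2"
definition lsi :: "nat \<Rightarrow> (int \<Rightarrow> real) \<Rightarrow> int \<Rightarrow> real" where
  "lsi m f k = (\<Sum>a<m. (-1) ^ a * f (k - int a)) / 2"
definition Ainv :: "nat \<Rightarrow> (int \<Rightarrow> real) \<Rightarrow> int \<Rightarrow> real" where
  "Ainv m f = rsi m (lsi m f)"

lemma opA_eq: "opA f = ls (rs f)"
  by (simp add: fun_eq_iff opA_def ls_def rs_def)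

lemma per_minus: "per m f \<Longrightarrow> f (k - int m) = f k"
  unfolding per_def by (metis diff_add_cancel)

lemma tele_r:
  assumes "odd m" "per m f"
  shows "(\<Sum>a<m. (-1) ^ a * (f (k + int a) + f (k + int a + 1))) = 2 * f k"
proof -
  define g where "g a = (-1::real) ^ a * f (k + int a)" for a
  have "(\<Sum>a<m. (-1) ^ a * (f (k + int a) + f (k + int a + 1))) = (\<Sum>a<m. g a - g (Suc a))"
    by (rule sum.cong) (auto simp: g_def algebra_simps)
  also have "\<dots> = g 0 - g m" by (rule sum_lessThan_telescope')
  also have "\<dots> = 2 * f k" using assms by (simp add: g_def per_def)
  finally show ?thesis .
qed

lemma tele_l:
  assumes "odd m" "per m f"
  shows "(\<Sum>a<m. (-1) ^ a * (f (k - int a - 1) + f (k - int a))) = 2 * f k"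
proof -
  define g where "g a = (-1::real) ^ a * f (k - int a)" for a
  have "(\<Sum>a<m. (-1) ^ a * (f (k - int a - 1) + f (k - int a))) = (\<Sum>a<m. g a - g (Suc a))"
    by (rule sum.cong) (auto simp: g_def algebra_simps)
  also have "\<dots> = g 0 - g m" by (rule sum_lessThan_telescope')
  also have "\<dots> = 2 * f k" using assms per_minus[OF assms(2), of k] by (simp add: g_def)
  finally show ?thesis .
qed

lemma per_rs: "per m f \<Longrightarrow> per m (rs f)"
  unfolding per_def rs_def
proof (intro allI)
  fix k assume h: "\<forall>k. f (k + int m) = f k"
  have e: "k + int m + 1 = (k + 1) + int m" by simp
  show "f (k + int m) + f (k + int m + 1) = f k + f (k + 1)"
    unfolding e using h by simp
qed
lemma per_ls: "per m f \<Longrightarrow> per m (ls f)"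
  unfolding per_def ls_def
proof (intro allI)
  fix k assume h: "\<forall>k. f (k + int m) = f k"
  have e: "k + int m - 1 = (k - 1) + int m" by simp
  show "f (k + int m - 1) + f (k + int m) = f (k - 1) + f k"
    unfolding e using h by simp
qed
lemma per_opA: "per m f \<Longrightarrow> per m (opA f)"
  by (simp add: opA_eq per_rs per_ls)
lemma per_rsi: "per m f \<Longrightarrow> per m (rsi m f)"
  unfolding per_def rsi_def
proof (intro allI)
  fix k assume h: "\<forall>k. f (k + int m) = f k"
  have "f (k + int m + int a) = f (k + int a)" for a using h[rule_format, of "k + int a"] by (simp add: ac_simps)
  then show "(\<Sum>a<m. (- 1) ^ a * f (k + int m + int a)) / 2 = (\<Sum>a<m. (- 1) ^ a * f (k + int a)) / 2"
    by simp
qed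
lemma per_lsi: "per m f \<Longrightarrow> per m (lsi m f)"
  unfolding per_def lsi_def
proof (intro allI)
  fix k assume h: "\<forall>k. f (k + int m) = f k"
  have "f (k + int m - int a) = f (k - int a)" for a using h[rule_format, of "k - int a"] by (simp add: algebra_simps)
  then show "(\<Sum>a<m. (- 1) ^ a * f (k + int m - int a)) / 2 = (\<Sum>a<m. (- 1) ^ a * f (k - int a)) / 2"
    by simp
qed
lemma per_Ainv: "per m f \<Longrightarrow> per m (Ainv m f)"
  by (simp add: Ainv_def per_rsi per_lsi)

lemma rs_rsi: "odd m \<Longrightarrow> per m f \<Longrightarrow> rs (rsi m f) = f"
  using tele_r[of m f]
  by (simp add: fun_eq_iff rs_def rsi_def sum_divide_distrib[symmetric] sum.distrib[symmetric]
      algebra_simps add_divide_distrib[symmetric])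
lemma rsi_rs: "odd m \<Longrightarrow> per m f \<Longrightarrow> rsi m (rs f) = f"
  using tele_r[of m f]
  by (simp add: fun_eq_iff rs_def rsi_def algebra_simps)
lemma ls_lsi: "odd m \<Longrightarrow> per m f \<Longrightarrow> ls (lsi m f) = f"
  using tele_l[of m f]
  by (simp add: fun_eq_iff ls_def lsi_def sum_divide_distrib[symmetric] sum.distrib[symmetric]
      algebra_simps add_divide_distrib[symmetric])
lemma lsi_ls: "odd m \<Longrightarrow> per m f \<Longrightarrow> lsi m (ls f) = f"
  using tele_l[of m f]
  by (simp add: fun_eq_iff ls_def lsi_def algebra_simps)

lemma opA_Ainv: "odd m \<Longrightarrow> per m f \<Longrightarrow> opA (Ainv m f) = f"
  by (simp add: opA_eq Ainv_def rs_rsi per_lsi ls_lsi)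
lemma Ainv_opA: "odd m \<Longrightarrow> per m f \<Longrightarrow> Ainv m (opA f) = f"
  by (simp add: opA_eq Ainv_def lsi_ls per_rs rsi_rs)

lemma wrap_range: "m \<ge> 1 \<Longrightarrow> wrap m k \<in> {1..int m}"
proof -
  assume "m \<ge> 1"
  then have p: "0 < int m" by simp
  have "(k - 1) mod int m < int m" "0 \<le> (k - 1) mod int m"
    using pos_mod_bound[OF p] pos_mod_sign[OF p] by auto
  then show ?thesis unfolding wrap_def by auto
qed
lemma wrap_id: "1 \<le> k \<Longrightarrow> k \<le> int m \<Longrightarrow> wrap m k = k"
  unfolding wrap_def by (simp add: mod_pos_pos_trivial)
lemma wrap_per: "wrap m (k + int m) = wrap m k"
proof -
  have e: "k + int m - 1 = (k - 1) + int m" by simp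
  show ?thesis by (simp only: wrap_def e mod_add_self2)
qed
lemma per_mult: "per m f \<Longrightarrow> f (k + int m * t) = f k"
proof (induct t rule: int_induct[where k=0])
  case base then show ?case by simp
next
  case (step1 i)
  then show ?case unfolding per_def by (metis add.assoc distrib_left mult.right_neutral)
next
  case (step2 i)
  then show ?case unfolding per_def
    by (metis (no_types, opaque_lifting) add.assoc diff_add_cancel distrib_left mult.right_neutral)
qed
lemma per_wrap: "per m f \<Longrightarrow> f (wrap m k) = f k"
proof -
  assume p: "per m f"
  have "wrap m k = k + int m * (- ((k - 1) div int m))"
    unfolding wrap_def by (simp add: mod_div_mult_eq[symmetric] algebra_simps minus_div_mult_eq_mod[symmetric])
  moreover have "f (k + int m * (- ((k - 1) div int m))) = f k" by (rule per_mult[OF p])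
  ultimately show ?thesis by simp
qed
lemma wrap_even: "even m \<Longrightarrow> even (wrap m k) \<longleftrightarrow> even k"
proof -
  assume "even m"
  then have "even (int m)" by simp
  then have "even ((k - 1) mod int m) \<longleftrightarrow> even (k - 1)"
    by (metis even_add even_mult_iff mod_mult_div_eq)
  then show ?thesis unfolding wrap_def by simp
qed

lemma conv_expand:
  assumes "i \<in> {1..int m}" "j \<in> {1..int n}"
  shows "conv gauss_filter m n X i j = opA (\<lambda>k. opA (\<lambda>l. X (wrap m k) (wrap n l)) j) i / 16"
proof -
  have e: "{1..3::int} = {1,2,3}" by auto
  show ?thesis using assms unfolding conv_def e
    by (simp add: gauss_filter_def opA_def algebra_simps)
qed


lemma even_kernel_m:
  assumes "even m" "m \<ge> 1" "n \<ge> 1"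
  defines "X0 \<equiv> (\<lambda>i j. if i \<in> {1..int m} \<and> j \<in> {1..int n} then (if even i then 1 else -1) else (0::real))"
  shows "conv gauss_filter m n X0 = (\<lambda>i j. 0)"
proof (intro ext)
  fix i j
  show "conv gauss_filter m n X0 i j = 0"
  proof (cases "i \<in> {1..int m} \<and> j \<in> {1..int n}")
    case True
    have "X0 (wrap m k) (wrap n l) = (if even k then 1 else -1)" for k l
      using wrap_range[OF assms(2), of k] wrap_range[OF assms(3), of l] wrap_even[OF assms(1), of k]
      unfolding X0_def by simp
    then show ?thesis using True conv_expand[of i m j n X0] by (cases "even i"; cases "even j"; simp add: opA_def)
  next
    case False then show ?thesis unfolding conv_def by auto
  qed
qed

lemma even_kernel_n:
  assumes "even n" "m \<ge> 1" "n \<ge> 1"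
  defines "X0 \<equiv> (\<lambda>i j. if i \<in> {1..int m} \<and> j \<in> {1..int n} then (if even j then 1 else -1) else (0::real))"
  shows "conv gauss_filter m n X0 = (\<lambda>i j. 0)"
proof (intro ext)
  fix i j
  show "conv gauss_filter m n X0 i j = 0"
  proof (cases "i \<in> {1..int m} \<and> j \<in> {1..int n}")
    case True
    have "X0 (wrap m k) (wrap n l) = (if even l then 1 else -1)" for k l
      using wrap_range[OF assms(2), of k] wrap_range[OF assms(3), of l] wrap_even[OF assms(1), of l]
      unfolding X0_def by simp
    then show ?thesis using True conv_expand[of i m j n X0] by (cases "even i"; cases "even j"; simp add: opA_def)
  next
    case False then show ?thesis unfolding conv_def by auto
  qed
qed

lemma conv_zero: "conv F m n (\<lambda>i j. 0) = (\<lambda>i j. 0)"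
  by (simp add: conv_def fun_eq_iff)

lemma not_unique:
  assumes "m \<ge> 1" "n \<ge> 1" "X0 \<in> mats m n" "conv gauss_filter m n X0 = (\<lambda>i j. 0)" "X0 1 1 \<noteq> 0"
  shows "\<not> (\<forall>B \<in> mats m n. \<exists>!X. X \<in> mats m n \<and> conv gauss_filter m n X = B)"
proof
  assume h: "\<forall>B \<in> mats m n. \<exists>!X. X \<in> mats m n \<and> conv gauss_filter m n X = B"
  have z: "(\<lambda>i j. 0::real) \<in> mats m n" by (simp add: mats_def)
  from h z have "\<exists>!X. X \<in> mats m n \<and> conv gauss_filter m n X = (\<lambda>i j. 0)" by blast
  then have "X0 = (\<lambda>i j. 0)" using assms(3,4) z conv_zero by blast
  then show False using assms(5) by simp
qed

lemma odd_unique: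
  assumes "odd m" "odd n" "X \<in> mats m n" "X' \<in> mats m n"
    and eq: "conv gauss_filter m n X = conv gauss_filter m n X'"
  shows "X = X'"
proof -
  have m1: "m \<ge> 1" "n \<ge> 1" using odd_pos[OF assms(1)] odd_pos[OF assms(2)] by auto
  define P where "P Y k l = Y (wrap m k) (wrap n l)" for Y :: "int \<Rightarrow> int \<Rightarrow> real" and k l
  define W where "W Y k = opA (P Y k)" for Y k
  define G where "G Y l = opA (\<lambda>k. W Y k l)" for Y l
  have perP1: "per m (\<lambda>k. P Y k l)" for Y l unfolding per_def P_def by (simp add: wrap_per)
  have perP2: "per n (P Y k)" for Y k unfolding per_def P_def by (simp add: wrap_per)
  have perW1: "per m (\<lambda>k. W Y k l)" for Y l
    using perP1[of Y] unfolding per_def W_def opA_def by simp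
  have perW2: "per n (W Y k)" for Y k unfolding W_def by (rule per_opA[OF perP2])
  have perG1: "per m (\<lambda>k. G Y l k)" for Y l unfolding G_def by (rule per_opA[OF perW1])
  have perG2: "per n (\<lambda>l. G Y l k)" for Y k
    using perW2[of Y] unfolding per_def G_def opA_def by simp
  have Gin: "G X j i = G X' j i" if "i \<in> {1..int m}" "j \<in> {1..int n}" for i j
  proof -
    have "conv gauss_filter m n X i j = conv gauss_filter m n X' i j" using eq by simp
    then show ?thesis using conv_expand[OF that, of X] conv_expand[OF that, of X']
      unfolding G_def W_def P_def by simp
  qed
  have Gall: "G X l k = G X' l k" for k l
  proof -
    have "G X l k = G X (wrap n l) (wrap m k)"
      using per_wrap[OF perG1[of X "wrap n l"], of k] per_wrap[OF perG2[of X k], of l] by simp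
    also have "\<dots> = G X' (wrap n l) (wrap m k)" using Gin wrap_range m1 by blast
    also have "\<dots> = G X' l k"
      using per_wrap[OF perG1[of X' "wrap n l"], of k] per_wrap[OF perG2[of X' k], of l] by simp
    finally show ?thesis .
  qed
  have Wall: "W X k l = W X' k l" for k l
  proof -
    have "(\<lambda>k. W X k l) = Ainv m (G X l)" unfolding G_def using Ainv_opA[OF assms(1) perW1] by simp
    also have "\<dots> = Ainv m (G X' l)" using Gall by presburger
    also have "\<dots> = (\<lambda>k. W X' k l)" unfolding G_def using Ainv_opA[OF assms(1) perW1] by simp
    finally show ?thesis by (metis)
  qed
  have Pall: "P X k = P X' k" for k
  proof -
    have "P X k = Ainv n (W X k)" unfolding W_def using Ainv_opA[OF assms(2) perP2] by simp
    also have "\<dots> = Ainv n (W X' k)" using Wall by presburger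
    also have "\<dots> = P X' k" unfolding W_def using Ainv_opA[OF assms(2) perP2] by simp
    finally show ?thesis .
  qed
  show ?thesis
  proof (intro ext)
    fix i j
    show "X i j = X' i j"
    proof (cases "i \<in> {1..int m} \<and> j \<in> {1..int n}")
      case True
      have "X (wrap m i) (wrap n j) = X' (wrap m i) (wrap n j)" using Pall[of i] unfolding P_def by metis
      moreover have "wrap m i = i" "wrap n j = j" using True wrap_id by auto
      ultimately show ?thesis by simp
    next
      case False
      then show ?thesis using assms(3,4) unfolding mats_def by auto
    qed
  qed
qed

lemma odd_exists:
  assumes "odd m" "odd n" "B \<in> mats m n"
  shows "\<exists>X. X \<in> mats m n \<and> conv gauss_filter m n X = B"
proof -
  have m1: "m \<ge> 1" "n \<ge> 1" using odd_pos[OF assms(1)] odd_pos[OF assms(2)] by auto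
  define Y where "Y k l = 16 * B (wrap m k) (wrap n l)" for k l
  define V where "V k l = Ainv m (\<lambda>k'. Y k' l) k" for k l
  define Z where "Z k = Ainv n (V k)" for k
  define X where "X i j = (if i \<in> {1..int m} \<and> j \<in> {1..int n} then Z i j else 0)" for i j
  have perY1: "per m (\<lambda>k. Y k l)" for l unfolding per_def Y_def by (simp add: wrap_per)
  have perY2: "Y k (l + int n) = Y k l" for k l unfolding Y_def by (simp add: wrap_per)
  have perV1: "per m (\<lambda>k. V k l)" for l unfolding V_def using per_Ainv[OF perY1] by simp
  have perV2: "per n (V k)" for k unfolding per_def V_def using perY2 by simp
  have perZ2: "per n (Z k)" for k unfolding Z_def by (rule per_Ainv[OF perV2])
  have Vp: "V (k + int m) = V k" for k
  proof (rule ext)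
    fix l show "V (k + int m) l = V k l" using perV1[of l] unfolding per_def by simp
  qed
  have perZ1: "per m (\<lambda>k. Z k l)" for l
    unfolding per_def Z_def using Vp by simp
  have PX: "X (wrap m k) (wrap n l) = Z k l" for k l
  proof -
    have "X (wrap m k) (wrap n l) = Z (wrap m k) (wrap n l)"
      unfolding X_def using wrap_range m1 by auto
    also have "\<dots> = Z (wrap m k) l" using per_wrap[OF perZ2] by simp
    also have "\<dots> = Z k l" using per_wrap[OF perZ1[of l]] by simp
    finally show ?thesis .
  qed
  have "conv gauss_filter m n X = B"
  proof (intro ext)
    fix i j
    show "conv gauss_filter m n X i j = B i j"
    proof (cases "i \<in> {1..int m} \<and> j \<in> {1..int n}")
      case True
      then have "conv gauss_filter m n X i j = opA (\<lambda>k. opA (Z k) j) i / 16"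
        using conv_expand[of i m j n X] PX by simp
      also have "\<dots> = opA (\<lambda>k. V k j) i / 16"
        unfolding Z_def using opA_Ainv[OF assms(2) perV2] by simp
      also have "\<dots> = Y i j / 16"
        unfolding V_def using opA_Ainv[OF assms(1) perY1] by simp
      also have "\<dots> = B i j" unfolding Y_def using True by (simp add: wrap_id)
      finally show ?thesis .
    next
      case False
      then show ?thesis using assms(3) unfolding mats_def conv_def by auto
    qed
  qed
  moreover have "X \<in> mats m n" unfolding mats_def X_def by auto
  ultimately show ?thesis by blast
qed

theorem corollary5:
  fixes m n :: nat
  assumes "m \<ge> 1" and "n \<ge> 1"
  shows "(\<forall>B \<in> mats m n. \<exists>!X. X \<in> mats m n \<and> conv gauss_filter m n X = B)
         \<longleftrightarrow> (m \<notin> {2 * l | l. l \<ge> 1} \<and> n \<notin> {2 * l | l. l \<ge> 1})"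
proof -
  have ev: "k \<notin> {2 * l | l. l \<ge> 1} \<longleftrightarrow> odd k" if "k \<ge> 1" for k :: nat
    using that by (auto elim!: evenE)
  show ?thesis
  proof (cases "odd m \<and> odd n")
    case True
    have "\<forall>B \<in> mats m n. \<exists>!X. X \<in> mats m n \<and> conv gauss_filter m n X = B"
    proof
      fix B assume B: "B \<in> mats m n"
      show "\<exists>!X. X \<in> mats m n \<and> conv gauss_filter m n X = B"
        using odd_exists[OF _ _ B] odd_unique True by metis
    qed
    then show ?thesis using True ev[OF assms(1)] ev[OF assms(2)] by simp
  next
    case False
    then consider "even m" | "even n" by auto
    then have "\<not> (\<forall>B \<in> mats m n. \<exists>!X. X \<in> mats m n \<and> conv gauss_filter m n X = B)"
    proof cases
      case 1
      show ?thesis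
        by (rule not_unique[OF assms(1) assms(2) _ even_kernel_m[OF 1 assms]]) (use assms in \<open>auto simp: mats_def\<close>)
    next
      case 2
      show ?thesis
        by (rule not_unique[OF assms(1) assms(2) _ even_kernel_n[OF 2 assms]]) (use assms in \<open>auto simp: mats_def\<close>)
    qed
    then show ?thesis using False ev[OF assms(1)] ev[OF assms(2)] by blast
  qed
qed

end
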